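(* Fix $p \in (0,1)$ and $c>0$, and for $x>0$ let $\alpha_x := 1-p(1-e^{-cx})$ and $f(x) := (2\alpha_x)^{1/x}$. If $p \le \frac12$, then $f$ is strictly decreasing on $(0,\infty)$. If $p>\frac12$, then there exists $x_* \in (0,\infty)$ such that $f$ is strictly decreasing on $(0,x_*]$ and strictly increasing on $[x_*,\infty)$. *)

theory Defs
  imports Complex_Main
begin

definition alphaA :: "real \<Rightarrow> real \<Rightarrow> real \<Rightarrow> real" where
  "alphaA p c x = 1 - p * (1 - exp (- c * x))"

definition fA :: "real \<Rightarrow> real \<Rightarrow> real \<Rightarrow> real" where
  "fA p c x = (2 * alphaA p c x) powr (1 / x)"

end

theory Submission
  imports Defs "HOL-Real_Asymp.Real_Asymp"
begin

lemma alpha_pos: "0 < p \<Longrightarrow> p < 1 \<Longrightarrow> 0 < alphaA p c x"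
proof -
  assume "0 < p" "p < 1"
  have "alphaA p c x = (1 - p) + p * exp (-c*x)" unfolding alphaA_def by algebra
  moreover have "p * exp (-c*x) > 0" using \<open>0<p\<close> by simp
  ultimately show ?thesis using \<open>p<1\<close> by linarith
qed

lemma alpha_gt: "0 < p \<Longrightarrow> alphaA p c x > 1 - p"
proof -
  assume "0 < p"
  have "alphaA p c x = (1 - p) + p * exp (-c*x)" unfolding alphaA_def by algebra
  moreover have "p * exp (-c*x) > 0" using \<open>0<p\<close> by simp
  ultimately show ?thesis by linarith
qed

lemma alpha_deriv: "DERIV (alphaA p c) x :> - p * c * exp (-c*x)"
  unfolding alphaA_def[abs_def]
  by (rule derivative_eq_intros refl | simp)+

locale setup_pc =
  fixes p c :: real
  assumes p0: "0 < p" and p1: "p < 1" and c0: "0 < c"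
begin

definition g where "g x = ln (2 * alphaA p c x)"
definition g' where "g' x = - p * c * exp (-c*x) / alphaA p c x"
definition h where "h x = g x / x"
definition N where "N x = x * g' x - g x"

lemma apos: "0 < alphaA p c x" using alpha_pos p0 p1 by blast

lemma g_deriv: "DERIV g x :> g' x"
proof -
  have "DERIV (\<lambda>x. ln (2 * alphaA p c x)) x :> (1 / (2 * alphaA p c x)) * (2 * (- p * c * exp (-c*x)))"
    using apos[of x] by (intro DERIV_ln_divide[THEN DERIV_chain2] DERIV_cmult alpha_deriv) simp
  then show ?thesis unfolding g_def[abs_def] g'_def using apos[of x] by (simp add: field_simps)
qed

lemma g'_deriv: "DERIV g' x :> p * c^2 * exp (-c*x) * (1-p) / (alphaA p c x)^2"
proof -
  have d1: "DERIV (\<lambda>x. - p * c * exp (-c*x)) x :> - p * c * (exp (-c*x) * (-c))"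
    by (rule derivative_eq_intros refl | simp)+
  have "DERIV g' x :> ((- p * c * (exp (-c*x) * (-c))) * alphaA p c x - (- p * c * exp (-c*x)) * (- p * c * exp (-c*x))) / (alphaA p c x * alphaA p c x)"
    unfolding g'_def[abs_def] using apos[of x]
    by (intro DERIV_divide d1 alpha_deriv) auto
  moreover have "((- p * c * (exp (-c*x) * (-c))) * alphaA p c x - (- p * c * exp (-c*x)) * (- p * c * exp (-c*x)))
     = p * c^2 * exp (-c*x) * (1-p)"
    unfolding alphaA_def by (simp add: algebra_simps power2_eq_square)
  ultimately show ?thesis by (simp add: power2_eq_square)
qed

lemma N_deriv: "DERIV N x :> x * (p * c^2 * exp (-c*x) * (1-p) / (alphaA p c x)^2)"
proof -
  have "DERIV N x :> (1 * g' x + (p * c^2 * exp (-c*x) * (1-p) / (alphaA p c x)^2) * x) - g' x"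
    unfolding N_def[abs_def]
    by (intro DERIV_diff DERIV_mult DERIV_ident g_deriv g'_deriv)
  then show ?thesis by (simp add: mult.commute)
qed

lemma N_cont: "continuous_on S N"
  using N_deriv by (meson DERIV_isCont continuous_at_imp_continuous_on)

lemma N_mono: "0 \<le> a \<Longrightarrow> a < b \<Longrightarrow> N a < N b"
proof (rule DERIV_pos_imp_increasing_open[OF _ _ N_cont])
  fix x assume "0 \<le> a" "a < x" 
  then have "x * (p * c^2 * exp (-c*x) * (1-p) / (alphaA p c x)^2) > 0"
    using p0 p1 c0 apos[of x] by (intro mult_pos_pos divide_pos_pos) auto
  then show "\<exists>y. DERIV N x :> y \<and> 0 < y" using N_deriv by blast
qed

lemma h_deriv: "x > 0 \<Longrightarrow> DERIV h x :> N x / x^2"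
proof -
  assume x: "x > 0"
  have "DERIV h x :> (g' x * x - g x * 1) / (x * x)"
    unfolding h_def[abs_def] using x by (intro DERIV_divide g_deriv DERIV_ident) auto
  then show ?thesis unfolding N_def by (simp add: power2_eq_square algebra_simps)
qed

lemma h_cont: "0 < a \<Longrightarrow> continuous_on {a..b} h"
  using h_deriv by (metis DERIV_isCont atLeastAtMost_iff continuous_at_imp_continuous_on less_le_trans)

lemma fA_h: "x > 0 \<Longrightarrow> fA p c x = exp (h x)"
  unfolding fA_def h_def g_def powr_def using apos[of x] by simp

lemma h_dec: "0 < a \<Longrightarrow> a < b \<Longrightarrow> (\<And>x. a < x \<Longrightarrow> x < b \<Longrightarrow> N x < 0) \<Longrightarrow> fA p c b < fA p c a"
proof -
  assume a: "0 < a" "a < b" and n: "\<And>x. a < x \<Longrightarrow> x < b \<Longrightarrow> N x < 0"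
  have "h b < h a"
  proof (rule DERIV_neg_imp_decreasing_open[OF a(2) _ h_cont[OF a(1)]])
    fix x assume "a < x" "x < b"
    then show "\<exists>y. DERIV h x :> y \<and> y < 0" using h_deriv[of x] n[of x] a
      by (intro exI[of _ "N x / x^2"]) (auto simp: divide_neg_pos)
  qed
  then show ?thesis using fA_h a by simp
qed

lemma h_inc: "0 < a \<Longrightarrow> a < b \<Longrightarrow> (\<And>x. a < x \<Longrightarrow> x < b \<Longrightarrow> N x > 0) \<Longrightarrow> fA p c a < fA p c b"
proof -
  assume a: "0 < a" "a < b" and n: "\<And>x. a < x \<Longrightarrow> x < b \<Longrightarrow> N x > 0"
  have "h a < h b"
  proof (rule DERIV_pos_imp_increasing_open[OF a(2) _ h_cont[OF a(1)]])
    fix x assume "a < x" "x < b"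
    then show "\<exists>y. DERIV h x :> y \<and> y > 0" using h_deriv[of x] n[of x] a
      by (intro exI[of _ "N x / x^2"]) auto
  qed
  then show ?thesis using fA_h a by simp
qed

lemma g'_neg: "g' x < 0"
  unfolding g'_def using apos[of x] p0 c0 by (simp add: divide_neg_pos)

lemma N0: "N 0 < 0"
  unfolding N_def g_def alphaA_def by simp

lemma N_lim: "(N \<longlongrightarrow> - ln (2 * (1 - p))) at_top"
proof -
  have e: "((\<lambda>x. exp(-c*x)) \<longlongrightarrow> 0) at_top" using c0 by real_asymp
  have xe: "((\<lambda>x. x * exp(-c*x)) \<longlongrightarrow> 0) at_top" using c0 by real_asymp
  have a: "(alphaA p c \<longlongrightarrow> 1 - p * (1 - 0)) at_top"
    unfolding alphaA_def[abs_def] by (intro tendsto_intros e)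
  have "((\<lambda>x. (- p * c * (x * exp(-c*x))) / alphaA p c x - ln (2 * alphaA p c x)) \<longlongrightarrow>
        (- p * c * 0) / (1 - p * (1 - 0)) - ln (2 * (1 - p * (1 - 0)))) at_top"
    using p1 by (intro tendsto_intros xe a) auto
  moreover have "(\<lambda>x. (- p * c * (x * exp(-c*x))) / alphaA p c x - ln (2 * alphaA p c x)) = N"
    unfolding N_def[abs_def] g_def g'_def by (auto simp: field_simps)
  ultimately show ?thesis by simp
qed


lemma part1: "p \<le> 1/2 \<Longrightarrow> strict_antimono_on {0<..} (fA p c)"
proof (rule monotone_onI)
  assume p: "p \<le> 1/2"
  have Nneg: "N x < 0" if "x > 0" for x
  proof -
    have "2 * alphaA p c x > 1" using alpha_gt[OF p0, of c x] p by linarith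
    then have "g x > 0" unfolding g_def by simp
    moreover have "x * g' x < 0" using g'_neg[of x] that by (simp add: mult_pos_neg)
    ultimately show ?thesis unfolding N_def by linarith
  qed
  fix r s :: real assume "r \<in> {0<..}" "s \<in> {0<..}" "r < s"
  then show "fA p c s < fA p c r" using Nneg by (intro h_dec) auto
qed

lemma part2: "p > 1/2 \<Longrightarrow> (\<exists>xs > 0. strict_antimono_on {0<..xs} (fA p c) \<and> strict_mono_on {xs..} (fA p c))"
proof -
  assume p: "p > 1/2"
  have "2 * (1 - p) < 1" "0 < 2 * (1 - p)" using p p1 by auto
  then have "ln (2 * (1 - p)) < 0" by simp
  then have "eventually (\<lambda>x. N x > 0) at_top"
    using N_lim by (intro order_tendstoD(1)) auto
  then obtain X0 where X0: "\<And>x. x \<ge> X0 \<Longrightarrow> N x > 0" by (auto simp: eventually_at_top_linorder)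
  define X where "X = max X0 1"
  have NX: "N X > 0" "X > 0" using X0 unfolding X_def by auto
  obtain xs where xs: "0 \<le> xs" "xs \<le> X" "N xs = 0"
    using IVT'[of N 0 0 X] N0 NX N_cont by force
  have xs0: "xs > 0" using xs N0 by (cases "xs = 0") auto
  have neg: "N x < 0" if "0 < x" "x < xs" for x using N_mono[of x xs] that xs by auto
  have pos: "N x > 0" if "xs < x" for x using N_mono[of xs x] that xs by auto
  have "strict_antimono_on {0<..xs} (fA p c)"
  proof (rule monotone_onI)
    fix r s :: real assume "r \<in> {0<..xs}" "s \<in> {0<..xs}" "r < s"
    then show "fA p c s < fA p c r" using neg by (intro h_dec) auto
  qed
  moreover have "strict_mono_on {xs..} (fA p c)"
  proof (rule monotone_onI)
    fix r s :: real assume "r \<in> {xs..}" "s \<in> {xs..}" "r < s"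
    then show "fA p c r < fA p c s" using pos xs0 by (intro h_inc) auto
  qed
  ultimately show ?thesis using xs0 by blast
qed

end

theorem claimA3:
  fixes p c :: real
  assumes "0 < p" "p < 1" "0 < c"
  shows "(p \<le> 1/2 \<longrightarrow> strict_antimono_on {0<..} (fA p c))
       \<and> (p > 1/2 \<longrightarrow> (\<exists>xs > 0. strict_antimono_on {0<..xs} (fA p c)
                                   \<and> strict_mono_on {xs..} (fA p c)))"
proof -
  interpret setup_pc p c using assms by unfold_locales
  show ?thesis using part1 part2 by blast
qed

end
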